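(* Let $P\subset\mathbb{R}^d$ be a full-dimensional lattice polytope with codegree $a$ satisfying $P=\lfloor aP\rfloor+\{P\}$. Then $aP=\lfloor aP\rfloor+\{aP\}$. Moreover, $\{aP\}=(a-1)P+\{P\}$.
   Context: $P$ has facet presentation $P=\{x: n_F(x)\ge -h_F\ \forall \text{ facets } F\}$ with $n_F\in(\mathbb{Z}^d)^*$ primitive inner normals and $h_F\in\mathbb{Z}$. The codegree of a lattice polytope $Q$ is $a_Q=\min\{k\in\mathbb{Z}_{\ge1}: \mathrm{int}(kQ)\cap\mathbb{Z}^d\ne\varnothing\}$; $a=a_P$. For a lattice polytope $Q$, $\lfloor Q\rfloor=\mathrm{conv}(\mathrm{int}(Q)\cap\mathbb{Z}^d)$, and the remainder polytope of $Q$, with facet presentation $Q=\{x: n_G(x)\ge -g_G\}$ (primitive inner normals, integer heights), is $\{Q\}=\mathrm{conv}\{x\in\mathbb{Z}^d: n_G(x)\ge (a_Q-1)g_G-1\ \forall \text{ facets } G\}$. In particular $aP$ has codegree $1$ and facet heights $ah_F$, so $\{aP\}=\mathrm{conv}\{x\in\mathbb{Z}^d: n_F(x)\ge -1\ \forall F\}$. $+$ is Minkowski sum and $0\cdot P=\{0\}$. *)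

theory Defs
  imports "HOL-Analysis.Analysis"
begin

definition lattice_pts :: "(real^'n) set" where
  "lattice_pts = {x. \<forall>i. x $ i \<in> \<int>}"

definition lattice_polytope :: "(real^'n) set \<Rightarrow> bool" where
  "lattice_polytope Q \<longleftrightarrow> (\<exists>S. finite S \<and> S \<subseteq> lattice_pts \<and> Q = convex hull S)"

definition dil :: "nat \<Rightarrow> (real^'n) set \<Rightarrow> (real^'n) set" where
  "dil k Q = (\<lambda>x. real k *\<^sub>R x) ` Q"

definition codegree :: "(real^'n) set \<Rightarrow> nat" where
  "codegree Q = (LEAST k::nat. k \<ge> 1 \<and> interior (dil k Q) \<inter> lattice_pts \<noteq> {})"

definition primitive :: "real^'n \<Rightarrow> bool" where
  "primitive v \<longleftrightarrow> v \<in> lattice_pts \<and> (\<forall>c::real. c *\<^sub>R v \<in> lattice_pts \<longrightarrow> c \<in> \<int>)"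

definition facet_normal :: "(real^'n) set \<Rightarrow> real^'n \<Rightarrow> real \<Rightarrow> bool" where
  "facet_normal Q v h \<longleftrightarrow> (\<exists>G. G facet_of Q \<and> primitive v \<and>
      Q \<subseteq> {x. v \<bullet> x \<ge> - h} \<and> G \<subseteq> {x. v \<bullet> x = - h})"

definition lfloor :: "(real^'n) set \<Rightarrow> (real^'n) set" where
  "lfloor Q = convex hull (interior Q \<inter> lattice_pts)"

definition remainder :: "(real^'n) set \<Rightarrow> (real^'n) set" where
  "remainder Q = convex hull {x \<in> lattice_pts. \<forall>v h. facet_normal Q v h \<longrightarrow>
      v \<bullet> x \<ge> (real (codegree Q) - 1) * h - 1}"

end

theory Submission
  imports Defs
begin

lemma lat_add: "x \<in> lattice_pts \<Longrightarrow> y \<in> lattice_pts \<Longrightarrow> x + y \<in> lattice_pts"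
  by (auto simp: lattice_pts_def)
lemma lat_diff: "x \<in> lattice_pts \<Longrightarrow> y \<in> lattice_pts \<Longrightarrow> x - y \<in> lattice_pts"
  by (auto simp: lattice_pts_def)
lemma lat_neg: "x \<in> lattice_pts \<Longrightarrow> - x \<in> lattice_pts"
  by (auto simp: lattice_pts_def)
lemma lat_scale: "x \<in> lattice_pts \<Longrightarrow> c \<in> \<int> \<Longrightarrow> c *\<^sub>R x \<in> lattice_pts"
  by (auto simp: lattice_pts_def)
lemma lat_scale_nat: "x \<in> lattice_pts \<Longrightarrow> real k *\<^sub>R x \<in> lattice_pts"
  by (auto simp: lattice_pts_def)
lemma lat_axis: "axis j 1 \<in> lattice_pts"
  by (auto simp: lattice_pts_def axis_def)
lemma lat_inner: "v \<in> lattice_pts \<Longrightarrow> x \<in> lattice_pts \<Longrightarrow> v \<bullet> x \<in> \<int>"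
  unfolding inner_vec_def lattice_pts_def by (auto intro!: Ints_sum Ints_mult)

lemma det_Ints:
  fixes A :: "real^'n^'n"
  assumes "\<And>i j. A$i$j \<in> \<int>"
  shows "det A \<in> \<int>"
  unfolding det_def using assms by (auto intro!: Ints_sum Ints_mult Ints_prod)

lemma primitive_scale:
  fixes w :: "real^'n"
  assumes w: "w \<in> lattice_pts" "w \<noteq> 0"
  shows "\<exists>c>0. primitive (c *\<^sub>R w)"
proof -
  obtain j where j: "w$j \<noteq> 0" using w(2) by (metis vec_eq_iff zero_index)
  have "w$j \<in> \<int>" using w(1) by (auto simp: lattice_pts_def)
  then obtain z where z: "w$j = of_int z" by (auto elim: Ints_cases)
  define N where "N = nat \<bar>z\<bar>"
  have Npos: "N \<ge> 1" using j z N_def by auto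
  have absN: "\<bar>w$j\<bar> = real N" using z N_def by simp
  define Pk where "Pk = (\<lambda>k::nat. k \<ge> 1 \<and> (real k / real N) *\<^sub>R w \<in> lattice_pts)"
  have PN: "Pk N" using Npos w(1) by (simp add: Pk_def)
  define K where "K = (LEAST k. Pk k)"
  have PK: "Pk K" unfolding K_def by (rule LeastI[of Pk N, OF PN])
  have Kmin: "\<And>k. Pk k \<Longrightarrow> K \<le> k" unfolding K_def by (rule Least_le)
  define v where "v = (real K / real N) *\<^sub>R w"
  have Kpos: "K \<ge> 1" using PK Pk_def by auto
  have vj: "\<bar>v$j\<bar> = real K" using absN Npos by (simp add: v_def abs_mult)
  have "primitive v"
    unfolding primitive_def
  proof (intro conjI allI impI)
    show "v \<in> lattice_pts" using PK by (simp add: Pk_def v_def)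
    fix c :: real assume cv: "c *\<^sub>R v \<in> lattice_pts"
    define m where "m = floor c"
    define r where "r = c - of_int m"
    have r01: "0 \<le> r" "r < 1" unfolding r_def m_def by linarith+
    have "r *\<^sub>R v = c *\<^sub>R v - of_int m *\<^sub>R v" by (simp add: r_def algebra_simps)
    also have "\<dots> \<in> lattice_pts"
      using PK by (intro lat_diff[OF cv] lat_scale) (auto simp: Pk_def v_def)
    finally have rv: "r *\<^sub>R v \<in> lattice_pts" .
    then have "(r *\<^sub>R v)$j \<in> \<int>" by (auto simp: lattice_pts_def)
    hence "\<bar>(r *\<^sub>R v)$j\<bar> \<in> \<int>" by (simp add: Ints_abs)
    hence "r * real K \<in> \<int>" using vj r01 by (simp add: abs_mult)
    then obtain q where q: "r * real K = of_int q" by (auto elim: Ints_cases)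
    have "of_int q \<ge> (0::real)" using q r01 by (metis mult_nonneg_nonneg of_nat_0_le_iff)
    hence q0: "q \<ge> 0" by simp
    have "r * real K < real K" using r01 Kpos by simp
    hence "of_int q < real K" using q by simp
    hence qK: "q < int K" by linarith
    have "q = 0"
    proof (rule ccontr)
      assume "q \<noteq> 0"
      hence "Pk (nat q)"
      proof -
        have "(real (nat q) / real N) *\<^sub>R w = r *\<^sub>R v"
          using q q0 by (simp add: v_def)
        thus ?thesis using rv \<open>q \<noteq> 0\<close> q0 by (simp add: Pk_def)
      qed
      hence "K \<le> nat q" by (rule Kmin)
      thus False using qK q0 by (simp add: le_nat_iff)
    qed
    hence "r = 0" using q Kpos by simp
    thus "c \<in> \<int>" unfolding r_def by simp
  qed
  moreover have "real K / real N > 0" using Kpos Npos by simp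
  ultimately show ?thesis unfolding v_def by blast
qed

lemma integer_normal:
  fixes T :: "(real^'n) set" and a :: "real^'n"
  assumes T: "finite T" "T \<subseteq> lattice_pts" "t0 \<in> T" and a: "a \<noteq> 0"
    and hyp: "\<forall>t\<in>T. a \<bullet> t = b"
    and dimT: "aff_dim T = int CARD('n) - 1"
  shows "\<exists>w \<mu>. w \<in> lattice_pts \<and> w \<noteq> 0 \<and> \<mu> > 0 \<and> w = \<mu> *\<^sub>R a"
proof -
  define D where "D = (+) (- t0) ` T"
  have "aff_dim T = int (dim D)" using aff_dim_eq_dim[of t0 T] hull_inc[OF T(3)] by (simp add: D_def)
  hence dimD: "dim D = CARD('n) - 1" using dimT by linarith
  define L where "L = {x. a \<bullet> x = 0}"
  have DL: "D \<subseteq> L" using hyp T(3) by (auto simp: D_def L_def inner_diff_right)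
  have Dlat: "D \<subseteq> lattice_pts" using T by (auto simp: D_def intro!: lat_diff)
  obtain B where B: "B \<subseteq> D" "independent B" "D \<subseteq> span B" "card B = dim D" by (rule basis_exists)
  have dimL: "dim L = CARD('n) - 1" using dim_hyperplane[OF a] by (simp add: L_def)
  have LspanB: "L \<subseteq> span B"
    using B DL dimL dimD by (intro card_ge_dim_independent) auto
  have spanBL: "span B \<subseteq> L" using B DL subspace_hyperplane[of a] unfolding L_def
    by (intro span_minimal) auto
  have aL: "a \<notin> L" using a by (simp add: L_def)
  have aB: "a \<notin> span B" using spanBL aL by blast
  have indep: "independent (insert a B)" using aB B(2) by (rule independent_insertI)
  have finB: "finite B" using B(2) by (rule finiteI_independent)
  have aB': "a \<notin> B" using aB span_base by blast
  have cardn: "CARD('n) \<ge> 1" by (simp add: Suc_leI)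
  have card: "card (insert a B) = CARD('n)" using finB aB' B(4) dimD cardn by simp
  obtain f where f: "bij_betw f (UNIV::'n set) (insert a B)"
    using finite_same_card_bij[of "UNIV::'n set" "insert a B"] finB card by auto
  have "a \<in> f ` UNIV" using f by (auto simp: bij_betw_def)
  then obtain i0 where i0: "f i0 = a" by auto
  have fB: "i \<noteq> i0 \<Longrightarrow> f i \<in> B" for i
  proof -
    assume "i \<noteq> i0"
    hence "f i \<noteq> a" using f i0 by (auto simp: bij_betw_def inj_on_def)
    moreover have "f i \<in> insert a B" using f by (auto simp: bij_betw_def)
    ultimately show ?thesis by auto
  qed
  define M :: "real^'n^'n" where "M = (\<chi> i. f i)"
  have detM: "det M \<noteq> 0"
  proof -
    have "\<forall>c. (\<Sum>i\<in>UNIV. c i *s row i M) = 0 \<longrightarrow> (\<forall>i. c i = 0)"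
    proof (intro allI impI)
      fix c :: "'n \<Rightarrow> real" and i
      assume c0: "(\<Sum>i\<in>UNIV. c i *s row i M) = 0"
      define g where "g = inv_into UNIV f"
      have gf: "g (f i) = i" for i using f unfolding g_def by (simp add: bij_betw_def)
      have "(\<Sum>i\<in>UNIV. c i *s row i M) = (\<Sum>i\<in>UNIV. c (g (f i)) *\<^sub>R f i)"
        by (simp add: gf M_def row_def scalar_mult_eq_scaleR)
      also have "\<dots> = (\<Sum>v\<in>insert a B. c (g v) *\<^sub>R v)"
        using f by (rule sum.reindex_bij_betw)
      finally have s0: "(\<Sum>v\<in>insert a B. c (g v) *\<^sub>R v) = 0" using c0 by simp
      have "\<not> dependent (insert a B)" using indep by simp
      hence "\<forall>v\<in>insert a B. c (g v) = 0"
        using s0 dependent_finite[of "insert a B"] finB by auto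
      moreover have "f i \<in> insert a B" using f by (auto simp: bij_betw_def)
      ultimately show "c i = 0" using gf by metis
    qed
    thus ?thesis
      unfolding invertible_det_nz[symmetric] invertible_right_inverse
        matrix_right_invertible_independent_rows .
  qed
  define g :: "real^'n \<Rightarrow> real^'n^'n" where "g x = (\<chi> i. if i = i0 then x else f i)" for x
  define w :: "real^'n" where "w = (\<chi> j. det (g (axis j 1)))"
  have wx: "w \<bullet> x = det (g x)" for x
  proof -
    have "det (g x) = det ((\<chi> i. if i = i0 then (\<Sum>j\<in>UNIV. x$j *s axis j 1) else f i)::real^'n^'n)"
      by (simp only: g_def basis_expansion)
    also have "\<dots> = (\<Sum>j\<in>UNIV. det ((\<chi> i. if i = i0 then x$j *s axis j 1 else f i)::real^'n^'n))"
      by (rule det_linear_row_sum) simp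
    also have "\<dots> = (\<Sum>j\<in>UNIV. x$j * det (g (axis j 1)))"
      unfolding g_def by (intro sum.cong refl det_row_mul)
    also have "\<dots> = w \<bullet> x" by (simp add: w_def inner_vec_def mult.commute)
    finally show ?thesis by simp
  qed
  have wB: "w \<bullet> u = 0" if "u \<in> B" for u
  proof -
    have "u \<in> f ` UNIV" using f that by (auto simp: bij_betw_def)
    then obtain j where j: "f j = u" by auto
    have "j \<noteq> i0" using j i0 aB' that by auto
    have "det (g u) = 0"
    proof (rule det_identical_rows[OF \<open>j \<noteq> i0\<close>])
      show "row j (g u) = row i0 (g u)" using j \<open>j \<noteq> i0\<close> unfolding g_def row_def
        by (simp add: vec_eq_iff)
    qed
    thus ?thesis by (simp add: wx)
  qed
  have wL: "w \<bullet> x = 0" if "x \<in> L" for x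
  proof -
    have "span B \<subseteq> {x. w \<bullet> x = 0}" using wB subspace_hyperplane[of w] by (intro span_minimal) auto
    thus ?thesis using that LspanB by blast
  qed
  have wa: "w \<bullet> a = det M"
  proof -
    have "g a = M" unfolding g_def M_def using i0 by (simp add: vec_eq_iff)
    thus ?thesis by (simp add: wx)
  qed
  define \<mu> where "\<mu> = (w \<bullet> a) / (a \<bullet> a)"
  have aa: "a \<bullet> a \<noteq> 0" using a by simp
  have wmu: "w = \<mu> *\<^sub>R a"
  proof -
    define r where "r = w - \<mu> *\<^sub>R a"
    have ar: "a \<bullet> r = 0" using aa by (simp add: r_def \<mu>_def inner_diff_right inner_commute)
    hence "w \<bullet> r = 0" using wL by (simp add: L_def)
    hence "r \<bullet> r = 0" using ar by (simp add: r_def inner_diff_left)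
    thus ?thesis by (simp add: r_def)
  qed
  have mu0: "\<mu> \<noteq> 0" using wa detM aa by (simp add: \<mu>_def)
  have wlat: "w \<in> lattice_pts"
  proof -
    have "det (g (axis j 1)) \<in> \<int>" for j
    proof (rule det_Ints)
      fix i k
      show "g (axis j 1) $ i $ k \<in> \<int>"
      proof (cases "i = i0")
        case True thus ?thesis using lat_axis[of j] by (simp add: g_def lattice_pts_def)
      next
        case False
        hence "f i \<in> lattice_pts" using fB B(1) Dlat by blast
        thus ?thesis using False by (simp add: g_def lattice_pts_def)
      qed
    qed
    thus ?thesis by (simp add: w_def lattice_pts_def)
  qed
  have w0: "w \<noteq> 0" using wmu mu0 a by simp
  show ?thesis
  proof (cases "\<mu> > 0")
    case True thus ?thesis using wlat w0 wmu by blast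
  next
    case False
    hence "- \<mu> > 0" using mu0 by simp
    moreover have "- w = (- \<mu>) *\<^sub>R a" using wmu by simp
    ultimately show ?thesis using lat_neg[OF wlat] w0 by (metis neg_equal_0_iff_equal)
  qed
qed

lemma full_aff_dim:
  fixes Q :: "(real^'n) set"
  assumes "interior Q \<noteq> {}"
  shows "aff_dim Q = int CARD('n)"
proof -
  have "aff_dim Q = aff_dim (affine hull Q)" by simp
  also have "\<dots> = int CARD('n)" using affine_hull_nonempty_interior[OF assms] by simp
  finally show ?thesis .
qed

lemma facet_violation:
  fixes Q :: "(real^'n) set"
  assumes S: "finite S" "S \<subseteq> lattice_pts" and Q: "Q = convex hull S"
    and int: "interior Q \<noteq> {}" and y: "y \<notin> Q"
  shows "\<exists>v h. facet_normal Q v h \<and> v \<bullet> y < - h"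
proof -
  have "polyhedron Q" using S Q by (intro polytope_imp_polyhedron) (auto simp: polytope_def)
  then obtain F where F: "finite F" and seq: "Q = affine hull Q \<inter> \<Inter>F"
    and faces: "\<And>h. h \<in> F \<Longrightarrow> \<exists>a b. a \<noteq> 0 \<and> h = {x. a \<bullet> x \<le> b}"
    and min: "\<And>F'. F' \<subset> F \<Longrightarrow> Q \<subset> (affine hull Q) \<inter> \<Inter>F'"
    by (simp add: polyhedron_Int_affine_minimal) meson
  then obtain aa bb where ab: "\<And>h. h \<in> F \<Longrightarrow> aa h \<noteq> 0 \<and> h = {x. aa h \<bullet> x \<le> bb h}"
    by metis
  have "affine hull Q = UNIV" using affine_hull_nonempty_interior[OF int] .
  then obtain h where h: "h \<in> F" "y \<notin> h" using seq y by auto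
  have a0: "aa h \<noteq> 0" and heq: "h = {x. aa h \<bullet> x \<le> bb h}" using ab[OF h(1)] by auto
  have yv: "aa h \<bullet> y > bb h" using h(2) heq by auto
  have Qh: "Q \<subseteq> h" using seq h(1) by blast
  define C where "C = Q \<inter> {x. aa h \<bullet> x = bb h}"
  have Cf: "C facet_of Q"
    unfolding C_def using facet_of_polyhedron_explicit[OF F seq ab min] h(1) by blast
  then obtain S' where S': "S' \<subseteq> S" "C = convex hull S'"
    using face_of_convex_hull_subset[of S C] S Q finite_imp_compact facet_of_imp_face_of by metis
  have "C \<noteq> {}" using Cf by (simp add: facet_of_def)
  then obtain t0 where t0: "t0 \<in> S'" using S' by auto
  have "aff_dim S' = aff_dim C" using S' by (simp add: aff_dim_convex_hull)
  also have "\<dots> = aff_dim Q - 1" using Cf by (simp add: facet_of_def)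
  finally have dS': "aff_dim S' = int CARD('n) - 1" using full_aff_dim[OF int] by simp
  have S'C: "S' \<subseteq> C" using S'(2) hull_subset[of S' convex] by simp
  have hypS': "\<forall>t\<in>S'. (- aa h) \<bullet> t = - bb h" using S'C by (auto simp: C_def)
  obtain w \<mu> where w: "w \<in> lattice_pts" "w \<noteq> 0" "\<mu> > 0" "w = \<mu> *\<^sub>R (- aa h)"
  proof -
    have "finite S'" using finite_subset[OF S'(1) S(1)] .
    moreover have "S' \<subseteq> lattice_pts" using S'(1) S(2) by blast
    moreover have "- aa h \<noteq> 0" using a0 by simp
    ultimately have "\<exists>w \<mu>. w \<in> lattice_pts \<and> w \<noteq> 0 \<and> \<mu> > 0 \<and> w = \<mu> *\<^sub>R (- aa h)"
      using integer_normal[OF _ _ t0 _ hypS' dS'] by blast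
    thus ?thesis using that by blast
  qed
  obtain c where c: "c > 0" "primitive (c *\<^sub>R w)" using primitive_scale[OF w(1,2)] by blast
  define v where "v = c *\<^sub>R w"
  define k where "k = c * \<mu>"
  have k0: "k > 0" using c w by (simp add: k_def)
  have vk: "v \<bullet> x = - k * (aa h \<bullet> x)" for x by (simp add: v_def w(4) k_def)
  have "facet_normal Q v (k * bb h)"
    unfolding facet_normal_def
  proof (intro exI conjI)
    show "C facet_of Q" by (rule Cf)
    show "primitive v" using c by (simp add: v_def)
    show "Q \<subseteq> {x. - (k * bb h) \<le> v \<bullet> x}"
    proof
      fix x assume "x \<in> Q"
      hence "aa h \<bullet> x \<le> bb h" using Qh heq by auto
      hence "k * (aa h \<bullet> x) \<le> k * bb h" using k0 by simp
      thus "x \<in> {x. - (k * bb h) \<le> v \<bullet> x}" by (simp add: vk)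
    qed
    show "C \<subseteq> {x. v \<bullet> x = - (k * bb h)}" by (auto simp: C_def vk)
  qed
  moreover have "v \<bullet> y < - (k * bb h)"
  proof -
    have "k * bb h < k * (aa h \<bullet> y)" using yv k0 by simp
    thus ?thesis by (simp add: vk)
  qed
  ultimately show ?thesis by blast
qed

lemma height_int:
  fixes Q :: "(real^'n) set"
  assumes S: "finite S" "S \<subseteq> lattice_pts" and Q: "Q = convex hull S"
    and fn: "facet_normal Q v h"
  shows "h \<in> \<int>" "v \<in> lattice_pts" "v \<noteq> 0"
proof -
  obtain G where G: "G facet_of Q" "primitive v" "Q \<subseteq> {x. v \<bullet> x \<ge> - h}" "G \<subseteq> {x. v \<bullet> x = - h}"
    using fn by (auto simp: facet_normal_def)
  show vl: "v \<in> lattice_pts" using G(2) by (simp add: primitive_def)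
  obtain S' where S': "S' \<subseteq> S" "G = convex hull S'"
    using face_of_convex_hull_subset[of S G] S Q finite_imp_compact facet_of_imp_face_of G(1) by metis
  have "G \<noteq> {}" using G(1) by (simp add: facet_of_def)
  then obtain t where t: "t \<in> S'" using S' by auto
  have "t \<in> G" using t S'(2) hull_subset[of S' convex] by auto
  hence "v \<bullet> t = - h" using G(4) by auto
  moreover have "v \<bullet> t \<in> \<int>" using lat_inner[OF vl] t S' S(2) by blast
  ultimately have "- h \<in> \<int>" by simp
  thus "h \<in> \<int>" by (metis Ints_minus minus_minus)
  show "v \<noteq> 0"
  proof
    assume "v = 0"
    hence "(1/2) *\<^sub>R v \<in> lattice_pts" using vl by simp
    hence "(1/2::real) \<in> \<int>" using G(2) unfolding primitive_def by blast
    then obtain z where "(1/2::real) = of_int z" by (auto elim: Ints_cases)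
    hence "(1::real) = of_int (2 * z)" by simp
    hence "1 = 2 * z" by linarith
    thus False by presburger
  qed
qed

lemma facet_transfer:
  fixes P :: "(real^'n) set"
  assumes k: "k > 0" and fn: "facet_normal ((\<lambda>x. k *\<^sub>R x) ` P) v h"
  shows "facet_normal P v (h / k)"
proof -
  define f where "f = (\<lambda>x::real^'n. k *\<^sub>R x)"
  have lf: "linear f" unfolding f_def by (simp add: linear_scaleR)
  have inf: "inj f" unfolding f_def using k by (simp add: inj_on_def)
  obtain G where G: "G facet_of f ` P" "primitive v" "f ` P \<subseteq> {x. v \<bullet> x \<ge> - h}"
     "G \<subseteq> {x. v \<bullet> x = - h}"
    using fn by (auto simp: facet_normal_def f_def)
  define G' where "G' = (\<lambda>x. (1/k) *\<^sub>R x) ` G"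
  have fG': "f ` G' = G" using k by (auto simp: f_def G'_def image_image image_iff)
  have "G' facet_of P"
  proof -
    have "G' face_of P" using G(1) face_of_linear_image[OF lf inf, of G' P] fG'
      by (simp add: facet_of_def)
    moreover have "G' \<noteq> {}" using G(1) fG' by (auto simp: facet_of_def)
    moreover have "aff_dim G' = aff_dim P - 1"
      using G(1) fG' aff_dim_injective_linear_image[OF lf inf, of G']
        aff_dim_injective_linear_image[OF lf inf, of P] by (simp add: facet_of_def)
    ultimately show ?thesis by (simp add: facet_of_def)
  qed
  moreover have "P \<subseteq> {x. v \<bullet> x \<ge> - (h / k)}"
  proof
    fix x assume "x \<in> P"
    hence "v \<bullet> (k *\<^sub>R x) \<ge> - h" using G(3) by (auto simp: f_def)
    hence "k * (v \<bullet> x) \<ge> - h" by simp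
    hence "(- h) / k \<le> (k * (v \<bullet> x)) / k" using k by (intro divide_right_mono) auto
    hence "v \<bullet> x \<ge> - h / k" using k by simp
    thus "x \<in> {x. v \<bullet> x \<ge> - (h / k)}" by simp
  qed
  moreover have "G' \<subseteq> {x. v \<bullet> x = - (h / k)}"
    using G(4) by (auto simp: G'_def)
  ultimately show ?thesis using G(2) by (auto simp: facet_normal_def)
qed

lemma bounded_lattice_finite:
  fixes X :: "(real^'n) set"
  assumes "bounded X" "X \<subseteq> lattice_pts"
  shows "finite X"
proof -
  obtain B where B: "\<And>x. x \<in> X \<Longrightarrow> norm x \<le> B" using assms(1) by (auto simp: bounded_iff)
  define g where "g = (\<lambda>x::real^'n. \<lambda>i. floor (x$i))"
  have inj: "inj_on g X"
  proof
    fix x y assume xy: "x \<in> X" "y \<in> X" "g x = g y"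
    show "x = y"
    proof (rule vec_eq_iff[THEN iffD2], rule allI)
      fix i
      have "x$i \<in> \<int>" "y$i \<in> \<int>" using xy assms(2) by (auto simp: lattice_pts_def)
      moreover have "floor (x$i) = floor (y$i)" using xy(3) by (metis g_def)
      ultimately show "x$i = y$i" by (metis floor_of_int Ints_cases)
    qed
  qed
  have "g ` X \<subseteq> Pi\<^sub>E UNIV (\<lambda>_. {- ceiling B .. ceiling B})"
  proof
    fix z assume "z \<in> g ` X"
    then obtain x where x: "x \<in> X" "z = g x" by auto
    have "\<bar>x$i\<bar> \<le> B" for i using B[OF x(1)] component_le_norm_cart[of x i] by linarith
    have "- ceiling B \<le> floor (x$i) \<and> floor (x$i) \<le> ceiling B" for i
    proof -
      have b1: "-B \<le> x$i" "x$i \<le> B" using \<open>\<bar>x$i\<bar> \<le> B\<close> by auto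
      have "floor (-B) \<le> floor (x$i)" using b1(1) by (rule floor_mono)
      moreover have "floor (-B) = - ceiling B" by (simp add: ceiling_def)
      moreover have "floor (x$i) \<le> floor B" using b1(2) by (rule floor_mono)
      moreover have "floor B \<le> ceiling B" by (rule floor_le_ceiling)
      ultimately show ?thesis by linarith
    qed
    thus "z \<in> Pi\<^sub>E UNIV (\<lambda>_. {- ceiling B .. ceiling B})" using x by (auto simp: g_def)
  qed
  moreover have "finite (Pi\<^sub>E (UNIV::'n set) (\<lambda>_. {- ceiling B .. ceiling B}))"
    by (rule finite_PiE) auto
  ultimately have "finite (g ` X)" by (rule finite_subset)
  thus ?thesis using inj by (rule finite_imageD)
qed

lemma minkowski_cancel:
  fixes A B C :: "(real^'n) set"
  assumes A: "bounded A" "A \<noteq> {}" and C: "closed C" "convex C" and sub: "A + B \<subseteq> A + C"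
  shows "B \<subseteq> C"
proof
  fix b assume b: "b \<in> B"
  show "b \<in> C"
  proof (rule ccontr)
    assume bC: "b \<notin> C"
    obtain u \<beta> where u: "u \<bullet> b < \<beta>" "\<And>x. x \<in> C \<Longrightarrow> u \<bullet> x > \<beta>"
      using separating_hyperplane_closed_point[OF C(2) C(1) bC] by blast
    define U where "U = (\<lambda>x. u \<bullet> x) ` A"
    have Ub: "bounded U" unfolding U_def
      by (rule bounded_linear_image[OF A(1)]) (rule bounded_linear_inner_right)
    hence bdd: "bdd_below U" by (rule bounded_imp_bdd_below)
    have Une: "U \<noteq> {}" using A(2) by (simp add: U_def)
    define m where "m = Inf U"
    define \<delta> where "\<delta> = \<beta> - u \<bullet> b"
    have d0: "\<delta> > 0" using u by (simp add: \<delta>_def)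
    have "Inf U < m + \<delta>" using d0 by (simp add: m_def)
    then obtain t where t: "t \<in> U" "t < m + \<delta>" using cInf_lessD[OF Une] by blast
    then obtain a0 where a0: "a0 \<in> A" "u \<bullet> a0 < m + \<delta>" by (auto simp: U_def)
    have "a0 + b \<in> A + C" using sub a0 b by blast
    then obtain a' c where ac: "a0 + b = a' + c" "a' \<in> A" "c \<in> C" by (rule set_plus_elim)
    have "u \<bullet> a' \<ge> m" unfolding m_def using ac(2) bdd by (auto simp: U_def intro: cInf_lower)
    moreover have "u \<bullet> c > \<beta>" using u(2) ac(3) .
    moreover have "u \<bullet> (a0 + b) = u \<bullet> (a' + c)" using ac(1) by simp
    ultimately show False using a0(2) by (simp add: inner_add_right \<delta>_def)
  qed
qed

lemma int_gap:
  fixes p q :: real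
  assumes "p \<in> \<int>" "q \<in> \<int>" "p > q"
  shows "p \<ge> q + 1"
proof -
  obtain i j where "p = of_int i" "q = of_int j" using assms by (auto elim!: Ints_cases)
  thus ?thesis using assms(3) by simp
qed

theorem lemma3p17:
  fixes P :: "(real^'n) set" and a :: nat
  assumes "lattice_polytope P"
    and "interior P \<noteq> {}"
    and "a = codegree P"
    and "P = lfloor (dil a P) + remainder P"
  shows "dil a P = lfloor (dil a P) + remainder (dil a P) \<and>
         remainder (dil a P) = dil (a - 1) P + remainder P"
proof -
  obtain S0 where S0: "finite S0" "S0 \<subseteq> lattice_pts" "P = convex hull S0"
    using assms(1) unfolding lattice_polytope_def by blast
  have Pne: "P \<noteq> {}" using assms(2) interior_subset by blast
  define R where "R = remainder P"
  define Q where "Q = dil a P"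
  define A where "A = lfloor Q"
  have hyp: "P = A + R" using assms(4) by (simp add: A_def Q_def R_def)
  have Ane: "A \<noteq> {}" using hyp Pne by auto
  have a0: "a \<noteq> 0"
  proof
    assume "a = 0"
    hence "Q = {0}" using Pne by (auto simp: Q_def dil_def)
    hence "A = {}" by (simp add: A_def lfloor_def)
    thus False using Ane by simp
  qed
  define S1 where "S1 = (\<lambda>x. real a *\<^sub>R x) ` S0"
  have QS: "Q = convex hull S1" by (simp add: Q_def dil_def S0(3) S1_def convex_hull_scaling)
  have S1: "finite S1" "S1 \<subseteq> lattice_pts" using S0 by (auto simp: S1_def intro: lat_scale_nat)
  define I where "I = interior Q \<inter> lattice_pts"
  have AI: "A = convex hull I" by (simp add: A_def I_def lfloor_def)
  have Ine: "I \<noteq> {}" using Ane AI by auto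
  have dil1: "dil 1 Q = Q" by (simp add: dil_def)
  have cQ: "codegree Q = 1"
    unfolding codegree_def
    by (rule Least_equality) (use Ine dil1 I_def in auto)
  define LQ where "LQ = {x \<in> lattice_pts. \<forall>v h. facet_normal Q v h \<longrightarrow> v \<bullet> x \<ge> -1}"
  have RQ: "remainder Q = convex hull LQ" by (simp add: remainder_def cQ LQ_def)
  define LP where "LP = {x \<in> lattice_pts. \<forall>v h. facet_normal P v h \<longrightarrow> v \<bullet> x \<ge> (real a - 1) * h - 1}"
  have RP: "R = convex hull LP" by (simp add: R_def remainder_def assms(3)[symmetric] LP_def)
  have intQ: "interior Q \<noteq> {}" using Ine I_def by auto
  have convQ: "convex Q" using QS by simp
  have K: "A + remainder Q \<subseteq> Q"
  proof -
    have "I + LQ \<subseteq> Q"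
    proof
      fix y assume "y \<in> I + LQ"
      then obtain x z where xz: "y = x + z" "x \<in> I" "z \<in> LQ" by (rule set_plus_elim)
      show "y \<in> Q"
      proof (rule ccontr)
        assume "y \<notin> Q"
        then obtain v h where fn: "facet_normal Q v h" and vy: "v \<bullet> y < - h"
          using facet_violation[OF S1(1) S1(2) QS intQ] by blast
        have hI: "h \<in> \<int>" "v \<in> lattice_pts" "v \<noteq> 0" using height_int[OF S1(1) S1(2) QS fn] by auto
        have "Q \<subseteq> {x. v \<bullet> x \<ge> -h}" using fn by (auto simp: facet_normal_def)
        hence "interior Q \<subseteq> interior {x. v \<bullet> x \<ge> -h}" by (rule interior_mono)
        hence "v \<bullet> x > -h" using xz(2) hI(3) by (auto simp: I_def)
        moreover have "v \<bullet> x \<in> \<int>" using lat_inner[OF hI(2)] xz(2) by (auto simp: I_def)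
        moreover have "-h \<in> \<int>" using hI(1) by simp
        ultimately have "v \<bullet> x \<ge> -h + 1" using int_gap by blast
        moreover have "v \<bullet> z \<ge> -1" using xz(3) fn by (auto simp: LQ_def)
        ultimately have "v \<bullet> y \<ge> -h" by (simp add: xz(1) inner_add_right)
        thus False using vy by simp
      qed
    qed
    hence "convex hull (I + LQ) \<subseteq> Q" using convQ by (rule hull_minimal)
    thus ?thesis by (simp add: AI RQ convex_hull_set_plus)
  qed
  define D where "D = dil (a - 1) P"
  define S2 where "S2 = (\<lambda>x. real (a-1) *\<^sub>R x) ` S0"
  have DS: "D = convex hull S2" by (simp add: D_def dil_def S0(3) S2_def convex_hull_scaling)
  have Sstep: "D + R \<subseteq> remainder Q"
  proof -
    have "S2 + LP \<subseteq> LQ"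
    proof
      fix y assume "y \<in> S2 + LP"
      then obtain s t where st: "y = real (a-1) *\<^sub>R s + t" "s \<in> S0" "t \<in> LP"
        by (auto simp: S2_def elim!: set_plus_elim)
      have ylat: "y \<in> lattice_pts" using st S0(2) by (auto simp: LP_def intro!: lat_add lat_scale_nat)
      have "v \<bullet> y \<ge> -1" if fn: "facet_normal Q v h" for v h
      proof -
        have apos: "real a > 0" using a0 by simp
        have fnP: "facet_normal P v (h / real a)"
          using facet_transfer[OF apos] fn by (simp add: Q_def dil_def)
        have sP: "s \<in> P" using st(2) S0(3) hull_subset[of S0 convex] by auto
        have vs: "v \<bullet> s \<ge> -(h / real a)" using fnP sP by (auto simp: facet_normal_def)
        have vt: "v \<bullet> t \<ge> (real a - 1) * (h / real a) - 1" using st(3) fnP unfolding LP_def by blast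
        have ra: "real (a-1) = real a - 1" using a0 by (simp add: of_nat_diff)
        have "real (a-1) * (v \<bullet> s) \<ge> real (a-1) * (-(h/real a))" using vs by (intro mult_left_mono) auto
        hence "v \<bullet> y \<ge> (real a - 1) * (-(h/real a)) + ((real a - 1) * (h / real a) - 1)"
          using vt ra st(1) by (simp add: inner_add_right)
        thus ?thesis by (simp add: algebra_simps)
      qed
      thus "y \<in> LQ" using ylat unfolding LQ_def by blast
    qed
    hence "convex hull (S2 + LP) \<subseteq> convex hull LQ" by (rule hull_mono)
    thus ?thesis by (simp add: DS RP RQ convex_hull_set_plus)
  qed
  have QDP: "Q \<subseteq> D + P"
  proof
    fix y assume "y \<in> Q"
    then obtain p where p: "p \<in> P" "y = real a *\<^sub>R p" by (auto simp: Q_def dil_def)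
    have "y = real (a-1) *\<^sub>R p + p" using a0 p(2) by (simp add: of_nat_diff algebra_simps)
    moreover have "real (a-1) *\<^sub>R p \<in> D" using p(1) unfolding D_def dil_def by (rule imageI)
    ultimately show "y \<in> D + P" using p(1) by (auto intro: set_plus_intro)
  qed
  have DP: "D + P = A + (D + R)" using hyp by (simp add: add_ac)
  have QA: "Q \<subseteq> A + (D + R)" using QDP DP by simp
  have claim1: "Q = A + remainder Q"
  proof
    show "A + remainder Q \<subseteq> Q" by (rule K)
    show "Q \<subseteq> A + remainder Q" using QA Sstep by (meson order_trans set_plus_mono2 order_refl)
  qed
  have claim2: "remainder Q = D + R"
  proof
    show "D + R \<subseteq> remainder Q" by (rule Sstep)
    have cpQ: "compact Q" using QS S1 by (simp add: compact_convex_hull finite_imp_compact)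
    have bA: "bounded A"
    proof -
      have "I \<subseteq> Q" using I_def interior_subset by blast
      hence "bounded I" using cpQ compact_imp_bounded bounded_subset by blast
      thus ?thesis using AI bounded_convex_hull by simp
    qed
    have cpD: "compact D" using DS S0 by (simp add: S2_def compact_convex_hull finite_imp_compact)
    have cpR: "compact R"
    proof -
      obtain a1 where a1: "a1 \<in> A" using Ane by auto
      have cpP: "compact P" using S0 by (simp add: compact_convex_hull finite_imp_compact)
      have "R \<subseteq> (+) (- a1) ` P"
      proof
        fix r assume "r \<in> R"
        hence "a1 + r \<in> P" using hyp a1 by (auto intro: set_plus_intro)
        thus "r \<in> (+) (- a1) ` P" by (force intro: image_eqI[where x="a1 + r"])
      qed
      moreover have "bounded ((+) (- a1) ` P)"
        using bounded_translation[OF compact_imp_bounded[OF cpP]] by blast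
      ultimately have "bounded R" by (rule bounded_subset[rotated])
      moreover have "LP \<subseteq> R" using RP hull_subset[of LP convex] by simp
      ultimately have "bounded LP" by (rule bounded_subset)
      hence "finite LP" using bounded_lattice_finite[of LP] by (auto simp: LP_def)
      thus ?thesis using RP by (simp add: compact_convex_hull finite_imp_compact)
    qed
    have cl: "closed (D + R)"
    proof -
      have "D + R = {x + y | x y. x \<in> D \<and> y \<in> R}" by (auto simp: set_plus_def)
      thus ?thesis using compact_sums[OF cpD cpR] compact_imp_closed by metis
    qed
    have cv: "convex (D + R)" using DS RP by (intro convex_set_plus) auto
    show "remainder Q \<subseteq> D + R"
      by (rule minkowski_cancel[OF bA Ane cl cv]) (use claim1 QA in auto)
  qed
  show ?thesis using claim1 claim2 by (simp add: Q_def A_def D_def R_def)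
qed

end
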